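(* Let $d\geq 2$ and $n$ be positive integers, $t\in\{1,d-1\}$, and $n\equiv t\pmod d$ (so $tn\equiv 1\pmod d$). Then, modulo $(1-aq^{tn})(a-q^{tn})(b-q^{tn})$, \[ \sum_{k=0}^{(tn-1)/d}\frac{(aq;q^d)_k(q/a;q^d)_k(q/b;q^d)_k}{(q^d;q^d)_k(c;q^d)_k(q^{d+3}/bc;q^d)_k}q^{dk} \equiv\frac{(1-aq^{tn})(a-q^{tn})}{(a-b)(1-ab)}\frac{(c/aq;q^d)_{m}(ac/q;q^d)_{m}}{(c;q^d)_{m}(c/q^2;q^d)_{m}} +\frac{(b-q^{tn})(ab-1-a^2+aq^{tn})}{(a-b)(1-ab)}\frac{(q/b)^{m}(bc/q;q^d)_{m}(q^{d+2}/c;q^d)_{m}}{(c;q^d)_{m}(q^{d+3}/bc;q^d)_{m}}, \] where $m=(tn-1)/d$.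
   Context: For complex $x$ and $q$, $(x;q)_0=1$ and $(x;q)_m=(1-x)(1-xq)\cdots(1-xq^{m-1})$ for positive integers $m$. Here $a,b,c,q$ are indeterminates and both sides are rational functions in them; the congruence $A\equiv B$ modulo $P=(1-aq^{tn})(a-q^{tn})(b-q^{tn})$ means that $A-B=P\cdot R$ for a rational function $R$ whose denominator is coprime to each of the factors $1-aq^{tn}$, $a-q^{tn}$, $b-q^{tn}$. *)

theory Defs
  imports "HOL-Computational_Algebra.Polynomial" "HOL-Computational_Algebra.Fraction_Field"
begin

definition qpoch :: "'a::comm_ring_1 \<Rightarrow> 'a \<Rightarrow> nat \<Rightarrow> 'a" where
  "qpoch x q m = (\<Prod>i<m. 1 - x * q ^ i)"

text \<open>Polynomial ring C[a,b,c,q] realised as iterated univariate polynomials.\<close>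
type_synonym mpoly4 = "complex poly poly poly poly"

definition va :: mpoly4 where "va = [:[:[:[:0, 1:]:]:]:]"
definition vb :: mpoly4 where "vb = [:[:[:0, 1:]:]:]"
definition vc :: mpoly4 where "vc = [:[:0, 1:]:]"
definition vq :: mpoly4 where "vq = [:0, 1:]"

type_synonym ratfun4 = "mpoly4 fract"

definition rf :: "mpoly4 \<Rightarrow> ratfun4" where "rf p = Fract p 1"

text \<open>A \<equiv> B modulo the product of the polynomials fs: A - B = (prod fs) * R where
  R = N/D is a rational function whose denominator D is coprime to each factor.\<close>
definition rf_cong :: "ratfun4 \<Rightarrow> ratfun4 \<Rightarrow> mpoly4 list \<Rightarrow> bool" where
  "rf_cong A B fs \<longleftrightarrow> (\<exists>N D. D \<noteq> 0 \<and> (\<forall>f\<in>set fs. coprime D f) \<and>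
      A - B = rf (prod_list fs) * Fract N D)"

end

theory Submission
  imports Defs "HOL-Computational_Algebra.Polynomial_Factorial" "HOL-Computational_Algebra.Field_as_Ring"
begin


lemma key_red:
  fixes A B C p X Y u v w z :: "'a::field"
  assumes "X \<noteq> 0" "p \<noteq> 0" "A \<noteq> 0" "B \<noteq> 0" "C \<noteq> 0"
    "u \<noteq> 0" "v \<noteq> 0" "w \<noteq> 0" "z \<noteq> 0"
  and U: "u = 1 - p*Y" and V: "v = 1 - C*Y" and W: "w = C*X - A*B*p*Y" and Z: "z = C*X - A*B"
  shows "(1-1/(X*p))*(p*Y)/ (u*v*(z/(C*X)))*((1-C*X)*(1-C*X/(A*B)))
     - (1-Y/X)*(p*Y)/ (u*v*(w/(C*X)))*((1-C*X/A)*(1-C*X/B))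
   = -(C*X/(A*B))*((1-A*p*Y)*(1-B*p*Y)*(1-Y/X)/(u*v*(w/(C*X))) - 1)"
  using assms(1-9) apply (simp add: field_simps)
  apply (simp only: U V W Z)
  by (simp add: algebra_simps)

lemma qpoch_0 [simp]: "qpoch x q 0 = 1" by (simp add: qpoch_def)
lemma qpoch_Suc: "qpoch x q (Suc k) = qpoch x q k * (1 - x*q^k)"
  by (simp add: qpoch_def)
lemma qpoch_Suc': "qpoch x q (Suc k) = (1 - x) * qpoch (x*q) q k"
  unfolding qpoch_def prod.lessThan_Suc_shift by (simp add: mult.assoc)
lemma qpoch_eq_0_iff: "qpoch (x::'a::field) q k = 0 \<longleftrightarrow> (\<exists>i<k. 1 - x*q^i = 0)"
  by (auto simp add: qpoch_def)
lemma qpoch_nz: "(\<And>i. i < k \<Longrightarrow> 1 - (x::'a::field)*q^i \<noteq> 0) \<Longrightarrow> qpoch x q k \<noteq> 0"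
  by (auto simp add: qpoch_eq_0_iff)

definition "sT A B C p n k = qpoch A p k * qpoch B p k * qpoch (1/p^n) p k /
   (qpoch p p k * qpoch C p k * qpoch (A*B*p/(C*p^n)) p k) * p^k"
definition "sW A B C p n k = (if k = 0 then 0 else -(C*p^n/(A*B)) * (qpoch A p k * qpoch B p k * qpoch (1/p^n) p (k-1)
   / (qpoch p p (k-1) * qpoch C p (k-1) * qpoch (A*B*p/(C*p^n)) p (k-1))))"

lemma sTW_Suc_j:
  fixes A B C p :: "'a::field" and n j :: nat
  assumes "p \<noteq> 0"
  defines "X \<equiv> p^n" and "Y \<equiv> p^j"
  defines "P1 \<equiv> qpoch A p j * qpoch B p j * qpoch (1/X) p j / (qpoch p p j * qpoch C p j * qpoch (A*B*p/(C*X)) p j) * (1-A*Y)*(1-B*Y)"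
  shows sT_Suc_j: "sT A B C p n (Suc j) = P1 * ((1-Y/X)*(p*Y)/((1-p*Y)*(1-C*Y)*(1-A*B*p/(C*X)*Y)))"
    and sT_Suc_j': "sT A B C p (Suc n) (Suc j) = P1 * ((1-1/(X*p))*(p*Y)/((1-p*Y)*(1-C*Y)*(1-A*B*p/(C*X)/p)))"
    and sW_Suc_j: "sW A B C p n (Suc (Suc j)) = P1 * (-(C*X/(A*B))*((1-A*p*Y)*(1-B*p*Y)*(1-Y/X)/((1-p*Y)*(1-C*Y)*(1-A*B*p/(C*X)*Y))))"
    and sW_Suc_j': "sW A B C p n (Suc j) = P1 * (-(C*X/(A*B)))"
proof -
  have x1: "1/p^Suc n * p = 1/X" using assms by (simp add: X_def)
  have x2: "A*B*p/(C*p^Suc n) * p = A*B*p/(C*X)" using assms by (simp add: X_def field_simps)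
  have x3: "A*B*p/(C*p^Suc n) = A*B*p/(C*X)/p" using assms by (simp add: X_def field_simps)
  show "sT A B C p n (Suc j) = P1 * ((1-Y/X)*(p*Y)/((1-p*Y)*(1-C*Y)*(1-A*B*p/(C*X)*Y)))"
    unfolding sT_def P1_def qpoch_Suc X_def Y_def by (simp add: divide_inverse inverse_mult_distrib mult_ac)
  show "sT A B C p (Suc n) (Suc j) = P1 * ((1-1/(X*p))*(p*Y)/((1-p*Y)*(1-C*Y)*(1-A*B*p/(C*X)/p)))"
  proof -
    have h1: "qpoch (1/p^Suc n) p (Suc j) = (1 - 1/(X*p)) * qpoch (1/X) p j"
      using assms by (subst qpoch_Suc') (simp add: x1 X_def mult.commute)
    have h2: "qpoch (A*B*p/(C*p^Suc n)) p (Suc j) = (1 - A*B*p/(C*X)/p) * qpoch (A*B*p/(C*X)) p j"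
      using assms by (subst qpoch_Suc') (simp add: x3)
    show ?thesis unfolding sT_def P1_def h1 h2 unfolding qpoch_Suc X_def Y_def
      by (simp add: divide_inverse inverse_mult_distrib mult_ac)
  qed
  show "sW A B C p n (Suc (Suc j)) = P1 * (-(C*X/(A*B))*((1-A*p*Y)*(1-B*p*Y)*(1-Y/X)/((1-p*Y)*(1-C*Y)*(1-A*B*p/(C*X)*Y))))"
    unfolding sW_def P1_def X_def Y_def by (simp add: qpoch_Suc divide_inverse inverse_mult_distrib mult_ac)
  show "sW A B C p n (Suc j) = P1 * (-(C*X/(A*B)))"
    unfolding sW_def P1_def X_def Y_def by (simp add: qpoch_Suc divide_inverse inverse_mult_distrib mult_ac)
qed

lemma aux_fact: "a1*d1 - a2*d2 = c*(y-1) \<Longrightarrow> (P::'a::comm_ring_1)*a1*d1 - P*a2*d2 = P*(c*y) - P*c"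
  by (metis (no_types, lifting) mult.assoc right_diff_distrib mult.right_neutral)

lemma sT_step_Suc:
  fixes A B C p :: "'a::field" and n j :: nat
  assumes nz: "A \<noteq> 0" "B \<noteq> 0" "C \<noteq> 0" "p \<noteq> 0"
    and hu: "1 - p*p^j \<noteq> 0" and hv: "1 - C*p^j \<noteq> 0"
    and hw: "1 - A*B*p/(C*p^n)*p^j \<noteq> 0" and hz: "1 - A*B*p/(C*p^n)/p \<noteq> 0"
  shows "sT A B C p (Suc n) (Suc j) * ((1-C*p^n)*(1-C*p^n/(A*B))) - sT A B C p n (Suc j) * ((1-C*p^n/A)*(1-C*p^n/B))
     = sW A B C p n (Suc (Suc j)) - sW A B C p n (Suc j)"
proof -
  define X where "X = p^n"
  define Y where "Y = p^j"
  have X0: "X \<noteq> 0" using nz by (simp add: X_def)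
  have ez: "1 - A*B*p/(C*X)/p = (C*X - A*B)/(C*X)" using nz X0 by (simp add: field_simps)
  have ew: "1 - A*B*p/(C*X)*Y = (C*X - A*B*p*Y)/(C*X)" using nz X0 by (simp add: field_simps)
  have "1 - A*B*p/(C*X)/p \<noteq> 0" unfolding X_def using hz .
  then have "(C*X - A*B)/(C*X) \<noteq> 0" using ez by metis
  then have z0: "C*X - A*B \<noteq> 0" by simp
  have "1 - A*B*p/(C*X)*Y \<noteq> 0" unfolding X_def Y_def using hw .
  then have "(C*X - A*B*p*Y)/(C*X) \<noteq> 0" using ew by metis
  then have w0: "C*X - A*B*p*Y \<noteq> 0" by simp
  have K: "(1-1/(X*p))*(p*Y)/ ((1-p*Y)*(1-C*Y)*((C*X - A*B)/(C*X)))*((1-C*X)*(1-C*X/(A*B)))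
     - (1-Y/X)*(p*Y)/((1-p*Y)*(1-C*Y)*((C*X - A*B*p*Y)/(C*X)))*((1-C*X/A)*(1-C*X/B))
   = -(C*X/(A*B))*((1-A*p*Y)*(1-B*p*Y)*(1-Y/X)/((1-p*Y)*(1-C*Y)*((C*X - A*B*p*Y)/(C*X))) - 1)"
    by (rule key_red) (use nz X0 hu hv z0 w0 in \<open>auto simp: Y_def\<close>)
  show ?thesis
    unfolding sT_Suc_j[OF nz(4), where n=n and j=j] sT_Suc_j'[OF nz(4), where n=n and j=j] sW_Suc_j[OF nz(4), where n=n and j=j] sW_Suc_j'[OF nz(4), where n=n and j=j]
    unfolding X_def[symmetric] Y_def[symmetric] ez ew
    by (rule aux_fact[OF K])
qed

lemma sT_step_0:
  fixes A B C p :: "'a::field"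
  assumes nz: "A \<noteq> 0" "B \<noteq> 0"
  shows "sT A B C p (Suc n) 0 * ((1-C*p^n)*(1-C*p^n/(A*B))) - sT A B C p n 0 * ((1-C*p^n/A)*(1-C*p^n/B))
     = sW A B C p n (Suc 0) - sW A B C p n 0"
  using nz by (simp add: sT_def sW_def qpoch_Suc field_simps)

lemma sT_vanish:
  fixes p :: "'a::field"
  assumes "p \<noteq> 0" "n < k"
  shows "sT A B C p n k = 0"
proof -
  have "qpoch (1/p^n) p k = 0" unfolding qpoch_eq_0_iff using assms by (intro exI[of _ n]) auto
  thus ?thesis by (simp add: sT_def)
qed

lemma sW_vanish:
  fixes p :: "'a::field"
  assumes "p \<noteq> 0" "Suc n < k"
  shows "sW A B C p n k = 0"
proof -
  have "qpoch (1/p^n) p (k-1) = 0" unfolding qpoch_eq_0_iff using assms by (intro exI[of _ n]) auto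
  thus ?thesis by (simp add: sW_def)
qed

lemma saalschutz:
  fixes A B C p :: "'a::field"
  assumes nz: "A \<noteq> 0" "B \<noteq> 0" "C \<noteq> 0" "p \<noteq> 0"
    and hP: "\<forall>i<M. 1 - p*p^i \<noteq> 0" and hC: "\<forall>i<M. 1 - C*p^i \<noteq> 0"
    and hD: "\<forall>n\<le>M. \<forall>i\<le>M. 1 - A*B*p/(C*p^n)*p^i \<noteq> 0"
    and hE: "\<forall>n<M. 1 - C*p^n/(A*B) \<noteq> 0"
  shows "n \<le> M \<Longrightarrow> (\<Sum>k=0..n. sT A B C p n k)
     = qpoch (C/A) p n * qpoch (C/B) p n / (qpoch C p n * qpoch (C/(A*B)) p n)"
proof (induction n)
  case 0
  then show ?case by (simp add: sT_def)
next
  case (Suc n)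
  define den where "den = (1-C*p^n)*(1-C*p^n/(A*B))"
  define num where "num = (1-C*p^n/A)*(1-C*p^n/B)"
  have nM: "n < M" using Suc.prems by simp
  have step: "sT A B C p (Suc n) k * den - sT A B C p n k * num = sW A B C p n (Suc k) - sW A B C p n k"
    if "k \<le> Suc n" for k
  proof (cases k)
    case 0
    then show ?thesis unfolding den_def num_def using sT_step_0[OF nz(1,2)] by simp
  next
    case (Suc j)
    have jn: "j \<le> n" using that Suc by simp
    have hz: "1 - A*B*p/(C*p^n)/p \<noteq> 0"
    proof -
      have "1 - A*B*p/(C*p^Suc n)*p^0 \<noteq> 0" by (rule hD[rule_format]) (use Suc.prems in auto)
      moreover have "A*B*p/(C*p^Suc n)*p^0 = A*B*p/(C*p^n)/p" using nz by (simp add: field_simps)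
      ultimately show ?thesis by simp
    qed
    show ?thesis unfolding Suc den_def num_def
      by (rule sT_step_Suc[OF nz]) (use hP hC hD nM jn hz in auto)
  qed
  have "(\<Sum>k=0..Suc n. sT A B C p (Suc n) k * den - sT A B C p n k * num)
        = (\<Sum>k=0..Suc n. sW A B C p n (Suc k) - sW A B C p n k)"
    by (rule sum.cong) (auto simp: step)
  also have "\<dots> = sW A B C p n (Suc (Suc n)) - sW A B C p n 0" by (rule sum_Suc_diff) simp
  also have "\<dots> = 0" using sW_vanish[OF nz(4), of n "Suc (Suc n)"] by (simp add: sW_def)
  finally have "(\<Sum>k=0..Suc n. sT A B C p (Suc n) k) * den = (\<Sum>k=0..Suc n. sT A B C p n k) * num"
    by (simp only: sum_subtractf sum_distrib_right[symmetric] right_minus_eq)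
  also have "(\<Sum>k=0..Suc n. sT A B C p n k) = (\<Sum>k=0..n. sT A B C p n k)"
    using sT_vanish[OF nz(4)] by simp
  also have "\<dots> = qpoch (C/A) p n * qpoch (C/B) p n / (qpoch C p n * qpoch (C/(A*B)) p n)"
    using Suc by simp
  finally have E: "(\<Sum>k=0..Suc n. sT A B C p (Suc n) k) * den = qpoch (C/A) p n * qpoch (C/B) p n / (qpoch C p n * qpoch (C/(A*B)) p n) * num" .
  have den0: "den \<noteq> 0" unfolding den_def using hC hE nM by auto
  show ?case
  proof -
    have "(\<Sum>k=0..Suc n. sT A B C p (Suc n) k) = qpoch (C/A) p n * qpoch (C/B) p n / (qpoch C p n * qpoch (C/(A*B)) p n) * num / den"
      by (metis E den0 nonzero_mult_div_cancel_right)
    also have "\<dots> = qpoch (C/A) p (Suc n) * qpoch (C/B) p (Suc n) / (qpoch C p (Suc n) * qpoch (C/(A*B)) p (Suc n))"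
      unfolding num_def den_def qpoch_Suc by (simp add: divide_inverse inverse_mult_distrib mult_ac)
    finally show ?thesis .
  qed
qed




lemma qpoch_reverse:
  fixes x y p :: "'a::field"
  assumes "x \<noteq> 0" "p \<noteq> 0" "0 < m \<Longrightarrow> x*y*p^(m-1) = 1"
  shows "qpoch x p m = (\<Prod>i<m. -(x*p^i)) * qpoch y p m"
proof (cases "m = 0")
  case True then show ?thesis by simp
next
  case False
  have xy: "x*y*p^(m-1) = 1" using assms(3) False by simp
  have f: "1 - x*p^i = (-(x*p^i)) * (1 - y*p^(m - Suc i))" if "i < m" for i
  proof -
    have "p^i * p^(m - Suc i) = p^(m-1)" using that by (simp flip: power_add)
    hence "x*p^i*(y*p^(m - Suc i)) = 1" using xy by (metis mult.assoc mult.left_commute)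
    thus ?thesis by (simp add: algebra_simps)
  qed
  have "qpoch x p m = (\<Prod>i<m. (-(x*p^i)) * (1 - y*p^(m - Suc i)))"
    unfolding qpoch_def by (rule prod.cong) (auto simp: f)
  also have "\<dots> = (\<Prod>i<m. -(x*p^i)) * (\<Prod>i<m. 1 - y*p^(m - Suc i))" by (rule prod.distrib)
  also have "(\<Prod>i<m. 1 - y*p^(m - Suc i)) = qpoch y p m"
    unfolding qpoch_def by (rule prod.nat_diff_reindex)
  finally show ?thesis .
qed

lemma qpoch_ratio_reverse:
  fixes x y x' y' p :: "'a::field"
  assumes "x \<noteq> 0" "x' \<noteq> 0" "p \<noteq> 0" "0 < m \<Longrightarrow> x*y*p^(m-1) = 1" "0 < m \<Longrightarrow> x'*y'*p^(m-1) = 1"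
  shows "qpoch x p m / qpoch x' p m = (x/x')^m * (qpoch y p m / qpoch y' p m)"
proof -
  have "(\<Prod>i<m. -(x*p^i)) / (\<Prod>i<m. -(x'*p^i)) = (\<Prod>i<m. -(x*p^i) / -(x'*p^i))"
    by (rule prod_dividef[symmetric])
  also have "\<dots> = (\<Prod>i<m. x/x')" using assms by (intro prod.cong) (auto simp: field_simps)
  also have "\<dots> = (x/x')^m" by simp
  finally have r: "(\<Prod>i<m. -(x*p^i)) / (\<Prod>i<m. -(x'*p^i)) = (x/x')^m" .
  have a1: "qpoch x p m = (\<Prod>i<m. -(x*p^i)) * qpoch y p m" by (rule qpoch_reverse) (use assms in auto)
  have a2: "qpoch x' p m = (\<Prod>i<m. -(x'*p^i)) * qpoch y' p m" by (rule qpoch_reverse) (use assms in auto)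
  show ?thesis
    by (simp only: a1 a2 times_divide_times_eq[symmetric] r)
qed

definition LHSf :: "nat \<Rightarrow> nat \<Rightarrow> 'a \<Rightarrow> 'a \<Rightarrow> 'a \<Rightarrow> 'a \<Rightarrow> 'a::field" where
  "LHSf d m a b c q = (\<Sum>k = 0..m. qpoch (a * q) (q^d) k * qpoch (q / a) (q^d) k * qpoch (q / b) (q^d) k
          / (qpoch (q^d) (q^d) k * qpoch c (q^d) k * qpoch (q ^ (d + 3) / (b * c)) (q^d) k) * (q^d) ^ k)"

definition RHSf :: "nat \<Rightarrow> nat \<Rightarrow> nat \<Rightarrow> 'a \<Rightarrow> 'a \<Rightarrow> 'a \<Rightarrow> 'a \<Rightarrow> 'a::field" where
  "RHSf d m N a b c q = ((1 - a * q ^ N) * (a - q ^ N) / ((a - b) * (1 - a * b))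
          * (qpoch (c / (a * q)) (q^d) m * qpoch (a * c / q) (q^d) m)
          / (qpoch c (q^d) m * qpoch (c / q ^ 2) (q^d) m)
       + (b - q ^ N) * (a * b - 1 - a ^ 2 + a * q ^ N) / ((a - b) * (1 - a * b))
          * ((q / b) ^ m * qpoch (b * c / q) (q^d) m * qpoch (q ^ (d + 2) / c) (q^d) m)
          / (qpoch c (q^d) m * qpoch (q ^ (d + 3) / (b * c)) (q^d) m))"

lemma spec_b:
  fixes a c q :: "'a::field"
  assumes nz: "a \<noteq> 0" "c \<noteq> 0" "q \<noteq> 0"
    and hN: "q^N = q*(q^d)^m"
    and hab: "a - q^N \<noteq> 0" "1 - a*q^N \<noteq> 0"
    and hP: "\<forall>i<m. 1 - q^d*(q^d)^i \<noteq> 0" and hC: "\<forall>i<m. 1 - c*(q^d)^i \<noteq> 0"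
    and hD: "\<forall>n\<le>m. \<forall>i\<le>m. 1 - (a*q)*(q/a)*q^d/(c*(q^d)^n)*(q^d)^i \<noteq> 0"
    and hE: "\<forall>n<m. 1 - c*(q^d)^n/((a*q)*(q/a)) \<noteq> 0"
  shows "LHSf d m a (q^N) c q = RHSf d m N a (q^N) c q"
proof -
  let ?p = "q^d"
  have p0: "?p \<noteq> 0" using nz by simp
  have e1: "q / q^N = 1/?p^m" using nz by (simp add: hN)
  have e2: "q ^ (d + 3) / (q^N * c) = (a*q)*(q/a)*?p/(c*?p^m)" using nz
    by (simp add: hN power_add field_simps power2_eq_square numeral_3_eq_3)
  have "LHSf d m a (q^N) c q = (\<Sum>k=0..m. sT (a*q) (q/a) c ?p m k)"
    unfolding LHSf_def sT_def e1 e2 ..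
  also have "\<dots> = qpoch (c/(a*q)) ?p m * qpoch (c/(q/a)) ?p m / (qpoch c ?p m * qpoch (c/((a*q)*(q/a))) ?p m)"
    by (rule saalschutz[OF _ _ nz(2) p0 hP hC hD hE]) (use nz in auto)
  also have "\<dots> = RHSf d m N a (q^N) c q"
  proof -
    have c1: "(1 - a * q ^ N) * (a - q ^ N) / ((a - q^N) * (1 - a * q^N)) = 1" using hab by simp
    have r1: "c/(q/a) = a*c/q" and r2: "c/((a*q)*(q/a)) = c/q^2" using nz by (simp_all add: field_simps power2_eq_square)
    show ?thesis unfolding RHSf_def c1 r1 r2 by simp
  qed
  finally show ?thesis .
qed

lemma spec_a:
  fixes b c q :: "'a::field"
  assumes nz: "b \<noteq> 0" "c \<noteq> 0" "q \<noteq> 0"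
    and hN: "q^N = q*(q^d)^m"
    and hab: "q^N - b \<noteq> 0" "1 - q^N*b \<noteq> 0"
    and hP: "\<forall>i<m. 1 - q^d*(q^d)^i \<noteq> 0" and hC: "\<forall>i<m. 1 - c*(q^d)^i \<noteq> 0"
    and hD: "\<forall>n\<le>m. \<forall>i\<le>m. 1 - (q^N*q)*(q/b)*q^d/(c*(q^d)^n)*(q^d)^i \<noteq> 0"
    and hE: "\<forall>n<m. 1 - c*(q^d)^n/((q^N*q)*(q/b)) \<noteq> 0"
  shows "LHSf d m (q^N) b c q = RHSf d m N (q^N) b c q"
proof -
  let ?p = "q^d" and ?Q = "q^N"
  have p0: "?p \<noteq> 0" using nz by simp
  have Q0: "?Q \<noteq> 0" using nz by simp
  have e1: "q / q^N = 1/?p^m" using nz by (simp add: hN)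
  have e2: "q ^ (d + 3) / (b * c) = (q^N*q)*(q/b)*?p/(c*?p^m)" using nz
    by (simp add: hN power_add field_simps power2_eq_square numeral_3_eq_3)
  have "LHSf d m ?Q b c q = (\<Sum>k=0..m. sT (?Q*q) (q/b) c ?p m k)"
    unfolding LHSf_def sT_def e1 e2 by (rule sum.cong) (simp_all add: mult_ac)
  also have "\<dots> = qpoch (c/(?Q*q)) ?p m * qpoch (c/(q/b)) ?p m / (qpoch c ?p m * qpoch (c/((?Q*q)*(q/b))) ?p m)"
    by (rule saalschutz[OF _ _ nz(2) p0 hP hC hD hE]) (use nz in auto)
  also have "\<dots> = (qpoch (c/(?Q*q)) ?p m / qpoch (c/((?Q*q)*(q/b))) ?p m) * qpoch (c/(q/b)) ?p m / qpoch c ?p m"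
    by (simp add: divide_inverse inverse_mult_distrib mult_ac)
  also have "qpoch (c/(?Q*q)) ?p m / qpoch (c/((?Q*q)*(q/b))) ?p m
      = (q/b)^m * (qpoch (q^(d+2)/c) ?p m / qpoch (q^(d+3)/(b*c)) ?p m)"
  proof -
    have "qpoch (c/(?Q*q)) ?p m / qpoch (c/((?Q*q)*(q/b))) ?p m
      = ((c/(?Q*q))/(c/((?Q*q)*(q/b))))^m * (qpoch (q^(d+2)/c) ?p m / qpoch (q^(d+3)/(b*c)) ?p m)"
    proof (rule qpoch_ratio_reverse)
      assume m0: "0 < m"
      have pm: "?p^m = ?p * ?p^(m-1)" using m0 by (simp flip: power_Suc)
      show "c / (?Q * q) * (q ^ (d + 2) / c) * ?p ^ (m - 1) = 1"
        using nz p0 unfolding hN by (simp add: pm power_add field_simps power2_eq_square)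
      show "c / (?Q * q * (q / b)) * (q ^ (d + 3) / (b * c)) * ?p ^ (m - 1) = 1"
        using nz p0 unfolding hN by (simp add: pm power_add field_simps power2_eq_square numeral_3_eq_3)
    qed (use nz in auto)
    also have "(c/(?Q*q))/(c/((?Q*q)*(q/b))) = q/b" using nz Q0 by (simp add: field_simps)
    finally show ?thesis .
  qed
  also have "\<dots> * qpoch (c/(q/b)) ?p m / qpoch c ?p m = RHSf d m N ?Q b c q"
  proof -
    have c2: "(b - ?Q) * (?Q * b - 1 - ?Q ^ 2 + ?Q * ?Q) / ((?Q - b) * (1 - ?Q * b)) = 1"
    proof -
      have "(b - ?Q) * (?Q * b - 1 - ?Q ^ 2 + ?Q * ?Q) = (?Q - b) * (1 - ?Q * b)"
        by (simp add: algebra_simps power2_eq_square)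
      thus ?thesis using hab by simp
    qed
    have r1: "c/(q/b) = b*c/q" using nz by simp
    show ?thesis unfolding RHSf_def c2 r1 by (simp add: divide_inverse inverse_mult_distrib mult_ac)
  qed
  finally show ?thesis .
qed

lemma LHSf_inv:
  fixes b c q Q :: "'a::field"
  shows "LHSf d m (1/Q) b c q = LHSf d m Q b c q"
  unfolding LHSf_def by (rule sum.cong) (simp_all add: mult_ac)

lemma spec_a':
  fixes b c q :: "'a::field"
  assumes nz: "b \<noteq> 0" "c \<noteq> 0" "q \<noteq> 0"
    and hN: "q^N = q*(q^d)^m"
    and hab: "q^N - b \<noteq> 0" "1 - q^N*b \<noteq> 0"
    and hP: "\<forall>i<m. 1 - q^d*(q^d)^i \<noteq> 0" and hC: "\<forall>i<m. 1 - c*(q^d)^i \<noteq> 0"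
    and hD: "\<forall>n\<le>m. \<forall>i\<le>m. 1 - (q^N*q)*(q/b)*q^d/(c*(q^d)^n)*(q^d)^i \<noteq> 0"
    and hE: "\<forall>n<m. 1 - c*(q^d)^n/((q^N*q)*(q/b)) \<noteq> 0"
  shows "LHSf d m (1/q^N) b c q = RHSf d m N (1/q^N) b c q"
proof -
  let ?Q = "q^N"
  have Q0: "?Q \<noteq> 0" using nz by simp
  have "LHSf d m (1/?Q) b c q = RHSf d m N ?Q b c q"
    unfolding LHSf_inv by (rule spec_a[OF assms])
  also have "\<dots> = RHSf d m N (1/?Q) b c q"
  proof -
    have c2: "(b - ?Q) * (?Q * b - 1 - ?Q ^ 2 + ?Q * ?Q) / ((?Q - b) * (1 - ?Q * b)) = 1"
    proof -
      have "(b - ?Q) * (?Q * b - 1 - ?Q ^ 2 + ?Q * ?Q) = (?Q - b) * (1 - ?Q * b)"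
        by (simp add: algebra_simps power2_eq_square)
      thus ?thesis using hab by simp
    qed
    have c3: "(b - ?Q) * (1/?Q * b - 1 - (1/?Q) ^ 2 + 1/?Q * ?Q) / ((1/?Q - b) * (1 - 1/?Q * b)) = 1"
    proof -
      have "(b - ?Q) * (1/?Q * b - 1 - (1/?Q) ^ 2 + 1/?Q * ?Q) = (1/?Q - b) * (1 - 1/?Q * b)"
        using Q0 nz by (simp add: field_simps power2_eq_square)
      moreover have "(1/?Q - b) * (1 - 1/?Q * b) \<noteq> 0"
      proof -
        have "(1/?Q - b) * (1 - 1/?Q * b) = (1 - ?Q*b)*(?Q - b)/(?Q*?Q)"
          using Q0 by (simp add: field_simps)
        thus ?thesis using hab Q0 by simp
      qed
      ultimately show ?thesis by simp
    qed
    show ?thesis unfolding RHSf_def c2 c3 using Q0 by simp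
  qed
  finally show ?thesis .
qed




definition rhom :: "('a::comm_ring_1 \<Rightarrow> 'b::comm_ring_1) \<Rightarrow> bool" where
  "rhom f \<longleftrightarrow> f 1 = 1 \<and> (\<forall>x y. f (x + y) = f x + f y) \<and> (\<forall>x y. f (x * y) = f x * f y)"

lemma rhom_1: "rhom f \<Longrightarrow> f 1 = 1" by (simp add: rhom_def)
lemma rhom_add: "rhom f \<Longrightarrow> f (x + y) = f x + f y" by (simp add: rhom_def)
lemma rhom_mult: "rhom f \<Longrightarrow> f (x * y) = f x * f y" by (simp add: rhom_def)
lemma rhom_0: "rhom f \<Longrightarrow> f 0 = 0"
proof -
  assume h: "rhom f"
  have "f 0 = f (0 + 0)" by simp
  also have "\<dots> = f 0 + f 0" by (rule rhom_add[OF h])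
  finally show ?thesis by simp
qed
lemma rhom_uminus: "rhom f \<Longrightarrow> f (- x) = - f x"
proof -
  assume h: "rhom f"
  have "f (- x) + f x = 0" using rhom_add[OF h, of "-x" x, symmetric] rhom_0[OF h] by simp
  thus ?thesis by (simp add: eq_neg_iff_add_eq_0)
qed
lemma rhom_diff: "rhom f \<Longrightarrow> f (x - y) = f x - f y"
  using rhom_add[of f x "-y"] rhom_uminus[of f y] by simp
lemma rhom_power: "rhom f \<Longrightarrow> f (x ^ n) = f x ^ n"
  by (induction n) (simp_all add: rhom_1 rhom_mult)
lemma rhom_sum: "rhom f \<Longrightarrow> f (sum g A) = (\<Sum>i\<in>A. f (g i))"
  by (induction A rule: infinite_finite_induct) (simp_all add: rhom_0 rhom_add)

definition pev :: "('a::comm_ring_1 \<Rightarrow> 'b::comm_ring_1) \<Rightarrow> 'b \<Rightarrow> 'a poly \<Rightarrow> 'b" where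
  "pev f x p = poly (map_poly f p) x"

lemma map_poly_add_hom: "rhom f \<Longrightarrow> map_poly f (p + q) = map_poly f p + map_poly f q"
  by (intro poly_eqI) (simp add: coeff_map_poly rhom_0 rhom_add)
lemma map_poly_mult_hom: "rhom f \<Longrightarrow> map_poly f (p * q) = map_poly f p * map_poly f q"
  by (intro poly_eqI) (simp add: coeff_map_poly rhom_0 coeff_mult rhom_sum rhom_mult)

lemma rhom_pev: assumes h: "rhom f" shows "rhom (pev f x)"
  unfolding rhom_def pev_def
  using map_poly_add_hom[OF h] map_poly_mult_hom[OF h] map_poly_1'[of f, OF rhom_1[OF h]]
  by simp

lemma pev_pCons: assumes h: "rhom f" shows "pev f x (pCons a p) = f a + x * pev f x p"
  using rhom_0[OF h] by (simp add: pev_def map_poly_pCons)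
lemma pev_const [simp]: assumes h: "rhom f" shows "pev f x [:a:] = f a"
  using pev_pCons[OF h, of x a 0] rhom_0[OF h] by (simp add: pev_def)
lemma pev_X [simp]: assumes h: "rhom f" shows "pev f x [:0, 1:] = x"
  using pev_pCons[OF h, of x 0 "[:1:]"] pev_pCons[OF h, of x 1 0] rhom_0[OF h] rhom_1[OF h] by (simp add: pev_def)

definition ev4 :: "(complex \<Rightarrow> 'k::comm_ring_1) \<Rightarrow> 'k \<Rightarrow> 'k \<Rightarrow> 'k \<Rightarrow> 'k \<Rightarrow> mpoly4 \<Rightarrow> 'k" where
  "ev4 f xa xb xc xq = pev (pev (pev (pev f xa) xb) xc) xq"

lemma rhom_ev4: "rhom f \<Longrightarrow> rhom (ev4 f xa xb xc xq)"
  unfolding ev4_def by (intro rhom_pev)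

lemma ev4_va [simp]: "rhom f \<Longrightarrow> ev4 f xa xb xc xq va = xa"
  by (simp add: ev4_def va_def rhom_pev)
lemma ev4_vb [simp]: "rhom f \<Longrightarrow> ev4 f xa xb xc xq vb = xb"
  by (simp add: ev4_def vb_def rhom_pev rhom_0 rhom_1)
lemma ev4_vc [simp]: "rhom f \<Longrightarrow> ev4 f xa xb xc xq vc = xc"
  by (simp add: ev4_def vc_def rhom_pev rhom_0 rhom_1)
lemma ev4_vq [simp]: "rhom f \<Longrightarrow> ev4 f xa xb xc xq vq = xq"
  by (simp add: ev4_def vq_def rhom_pev rhom_0 rhom_1)
lemma ev4_const [simp]: "rhom f \<Longrightarrow> ev4 f xa xb xc xq [:[:[:[:z:]:]:]:] = f z"
  by (simp add: ev4_def rhom_pev)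

lemma pCons_split: "pCons a p = [:a:] + [:0, 1:] * (p::'a::comm_ring_1 poly)"
  by (simp add: poly_eq_iff coeff_pCons split: nat.split)

lemma mpoly4_induct [case_names add mult cst a b c q]:
  assumes add: "\<And>x y. P x \<Longrightarrow> P y \<Longrightarrow> P (x + y)" and mult: "\<And>x y. P x \<Longrightarrow> P y \<Longrightarrow> P (x * y)"
    and cst: "\<And>z. P [:[:[:[:z:]:]:]:]" and a: "P va" and b: "P vb" and c: "P vc" and q: "P vq"
  shows "P (g::mpoly4)"
proof -
  have 1: "P [:[:[:p:]:]:]" for p
  proof (induction p)
    case 0 then show ?case using cst[of 0] by simp
  next
    case (pCons z p)
    have "[:[:[:pCons z p:]:]:] = [:[:[:[:z:]:]:]:] + va * [:[:[:p:]:]:]"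
      by (subst pCons_split) (simp add: va_def)
    then show ?case by (metis add mult cst a pCons.IH)
  qed
  have 2: "P [:[:h:]:]" for h
  proof (induction h)
    case 0 then show ?case using 1[of 0] by simp
  next
    case (pCons z p)
    have "[:[:pCons z p:]:] = [:[:[:z:]:]:] + vb * [:[:p:]:]"
      by (subst pCons_split) (simp add: vb_def)
    then show ?case by (metis add mult 1 b pCons.IH)
  qed
  have 3: "P [:h:]" for h
  proof (induction h)
    case 0 then show ?case using 2[of 0] by simp
  next
    case (pCons z p)
    have "[:pCons z p:] = [:[:z:]:] + vc * [:p:]"
      by (subst pCons_split) (simp add: vc_def)
    then show ?case by (metis add mult 2 c pCons.IH)
  qed
  show "P g"
  proof (induction g)
    case 0 then show ?case using 3[of 0] by simp
  next
    case (pCons z p)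
    have "pCons z p = [:z:] + vq * p"
      by (subst pCons_split) (simp add: vq_def)
    then show ?case by (metis add mult 3 q pCons.IH)
  qed
qed




lemma rf_add: "rf (x + y) = rf x + rf y" by (simp add: rf_def)
lemma rf_mult: "rf (x * y) = rf x * rf y" by (simp add: rf_def)
lemma rf_1: "rf 1 = 1" by (simp add: rf_def One_fract_def)
lemma rf_0: "rf 0 = 0" by (simp add: rf_def Zero_fract_def)
lemma rhom_rf: "rhom rf" by (simp add: rhom_def rf_add rf_mult rf_1)
lemma rf_diff: "rf (x - y) = rf x - rf y" by (rule rhom_diff[OF rhom_rf])
lemma rf_power: "rf (x ^ n) = rf x ^ n" by (rule rhom_power[OF rhom_rf])
lemma rf_inj: "rf x = rf y \<longleftrightarrow> x = y" by (simp add: rf_def eq_fract)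
lemma rf_eq_0: "rf x = 0 \<longleftrightarrow> x = 0" using rf_inj[of x 0] by (simp add: rf_0)

definition cst :: "complex \<Rightarrow> ratfun4" where "cst z = rf [:[:[:[:z:]:]:]:]"
lemma rhom_cst: "rhom cst"
  unfolding rhom_def cst_def by (simp add: rf_1 rf_add[symmetric] rf_mult[symmetric] pCons_one)

definition sig :: "ratfun4 \<Rightarrow> ratfun4 \<Rightarrow> mpoly4 \<Rightarrow> ratfun4" where
  "sig xa xb = ev4 cst xa xb (rf vc) (rf vq)"

lemma rhom_sig: "rhom (sig xa xb)" unfolding sig_def by (rule rhom_ev4[OF rhom_cst])

lemma sig_id: "sig (rf va) (rf vb) g = rf g"
proof (induction g rule: mpoly4_induct)
  case (add x y) then show ?case by (simp add: rhom_add[OF rhom_sig] rf_add)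
next
  case (mult x y) then show ?case by (simp add: rhom_mult[OF rhom_sig] rf_mult)
qed (simp_all add: sig_def rhom_cst cst_def)

lemma sig_va [simp]: "sig xa xb va = xa" and sig_vb [simp]: "sig xa xb vb = xb"
  and sig_vc [simp]: "sig xa xb vc = rf vc" and sig_vq [simp]: "sig xa xb vq = rf vq"
  by (simp_all add: sig_def rhom_cst)

lemma kernel_a:
  assumes S1: "\<And>g. rf g \<in> S" and S2: "x \<in> S" and S3: "\<And>u v. u\<in>S \<Longrightarrow> v\<in>S \<Longrightarrow> u+v \<in> S"
    and S4: "\<And>u v. u\<in>S \<Longrightarrow> v\<in>S \<Longrightarrow> u*v \<in> S"
  shows "sig x (rf vb) g \<in> S \<and> (\<exists>t\<in>S. rf g - sig x (rf vb) g = (rf va - x) * t)"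
proof (induction g rule: mpoly4_induct)
  case (add g h)
  then obtain t1 t2 where t: "t1 \<in> S" "t2 \<in> S" "rf g - sig x (rf vb) g = (rf va - x) * t1"
     "rf h - sig x (rf vb) h = (rf va - x) * t2" by blast
  have "rf (g + h) - sig x (rf vb) (g + h) = (rf va - x) * (t1 + t2)"
    using t by (simp add: rf_add rhom_add[OF rhom_sig] algebra_simps)
  then show ?case using add t S3 by (auto simp: rhom_add[OF rhom_sig])
next
  case (mult g h)
  then obtain t1 t2 where t: "t1 \<in> S" "t2 \<in> S" "rf g - sig x (rf vb) g = (rf va - x) * t1"
     "rf h - sig x (rf vb) h = (rf va - x) * t2" by blast
  have "rf (g * h) - sig x (rf vb) (g * h) = (rf va - x) * (t1 * rf h + sig x (rf vb) g * t2)"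
  proof -
    have "rf (g * h) - sig x (rf vb) (g * h) = (rf g - sig x (rf vb) g) * rf h + sig x (rf vb) g * (rf h - sig x (rf vb) h)"
      by (simp add: rf_mult rhom_mult[OF rhom_sig] algebra_simps)
    also have "\<dots> = (rf va - x) * (t1 * rf h + sig x (rf vb) g * t2)" by (simp only: t(3) t(4)) (simp add: algebra_simps)
    finally show ?thesis .
  qed
  moreover have "t1 * rf h + sig x (rf vb) g * t2 \<in> S" using mult t S1 S3 S4 by blast
  ultimately show ?case using mult S4 by (auto simp: rhom_mult[OF rhom_sig])
next
  case (cst z)
  have "sig x (rf vb) [:[:[:[:z:]:]:]:] = rf [:[:[:[:z:]:]:]:]" by (simp add: sig_def rhom_cst cst_def)
  then show ?case using S1[of 0] S1 by (auto simp: rf_0 intro!: bexI[of _ 0])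
next
  case a
  show ?case using S2 S1[of 1] by (auto simp: rf_1 intro!: bexI[of _ 1])
next
  case b
  show ?case using S1 S1[of 0] by (auto simp: rf_0 intro!: bexI[of _ 0])
next
  case c
  show ?case using S1 S1[of 0] by (auto simp: rf_0 intro!: bexI[of _ 0])
next
  case q
  show ?case using S1 S1[of 0] by (auto simp: rf_0 intro!: bexI[of _ 0])
qed

lemma kernel_b:
  assumes S1: "\<And>g. rf g \<in> S" and S2: "x \<in> S" and S3: "\<And>u v. u\<in>S \<Longrightarrow> v\<in>S \<Longrightarrow> u+v \<in> S"
    and S4: "\<And>u v. u\<in>S \<Longrightarrow> v\<in>S \<Longrightarrow> u*v \<in> S"
  shows "sig (rf va) x g \<in> S \<and> (\<exists>t\<in>S. rf g - sig (rf va) x g = (rf vb - x) * t)"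
proof (induction g rule: mpoly4_induct)
  case (add g h)
  then obtain t1 t2 where t: "t1 \<in> S" "t2 \<in> S" "rf g - sig (rf va) x g = (rf vb - x) * t1"
     "rf h - sig (rf va) x h = (rf vb - x) * t2" by blast
  have "rf (g + h) - sig (rf va) x (g + h) = (rf vb - x) * (t1 + t2)"
    using t by (simp add: rf_add rhom_add[OF rhom_sig] algebra_simps)
  then show ?case using add t S3 by (auto simp: rhom_add[OF rhom_sig])
next
  case (mult g h)
  then obtain t1 t2 where t: "t1 \<in> S" "t2 \<in> S" "rf g - sig (rf va) x g = (rf vb - x) * t1"
     "rf h - sig (rf va) x h = (rf vb - x) * t2" by blast
  have "rf (g * h) - sig (rf va) x (g * h) = (rf vb - x) * (t1 * rf h + sig (rf va) x g * t2)"
  proof -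
    have "rf (g * h) - sig (rf va) x (g * h) = (rf g - sig (rf va) x g) * rf h + sig (rf va) x g * (rf h - sig (rf va) x h)"
      by (simp add: rf_mult rhom_mult[OF rhom_sig] algebra_simps)
    also have "\<dots> = (rf vb - x) * (t1 * rf h + sig (rf va) x g * t2)" by (simp only: t(3) t(4)) (simp add: algebra_simps)
    finally show ?thesis .
  qed
  moreover have "t1 * rf h + sig (rf va) x g * t2 \<in> S" using mult t S1 S3 S4 by blast
  ultimately show ?case using mult S4 by (auto simp: rhom_mult[OF rhom_sig])
next
  case (cst z)
  have "sig (rf va) x [:[:[:[:z:]:]:]:] = rf [:[:[:[:z:]:]:]:]" by (simp add: sig_def rhom_cst cst_def)
  then show ?case using S1[of 0] S1 by (auto simp: rf_0 intro!: bexI[of _ 0])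
next
  case a
  show ?case using S1 S1[of 0] by (auto simp: rf_0 intro!: bexI[of _ 0])
next
  case b
  show ?case using S2 S1[of 1] by (auto simp: rf_1 intro!: bexI[of _ 1])
next
  case c
  show ?case using S1 S1[of 0] by (auto simp: rf_0 intro!: bexI[of _ 0])
next
  case q
  show ?case using S1 S1[of 0] by (auto simp: rf_0 intro!: bexI[of _ 0])
qed




lemma vq_nz: "vq \<noteq> 0" by (simp add: vq_def)
lemma rf_vq_nz: "rf vq \<noteq> 0" using vq_nz rf_eq_0 by blast

lemma ker2: "sig (rf vq ^ N) (rf vb) g = 0 \<longleftrightarrow> (va - vq^N) dvd g"
proof
  have R1: "rf g \<in> range rf" for g by simp
  have R2: "rf vq ^ N \<in> range rf" by (simp add: rf_power[symmetric])
  have R3: "u + v \<in> range rf" if "u \<in> range rf" "v \<in> range rf" for u v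
  proof -
    from that obtain a b where "u = rf a" "v = rf b" by auto
    thus ?thesis by (simp add: rf_add[symmetric])
  qed
  have R4: "u * v \<in> range rf" if "u \<in> range rf" "v \<in> range rf" for u v
  proof -
    from that obtain a b where "u = rf a" "v = rf b" by auto
    thus ?thesis by (simp add: rf_mult[symmetric])
  qed
  assume h: "sig (rf vq ^ N) (rf vb) g = 0"
  obtain t where "t \<in> range rf" "rf g - sig (rf vq ^ N) (rf vb) g = (rf va - rf vq ^ N) * t"
    using kernel_a[of "range rf" "rf vq ^ N", OF R1 R2 R3 R4] by blast
  then obtain u where "rf g = (rf va - rf vq ^ N) * rf u" using h by auto
  hence "rf g = rf ((va - vq^N) * u)" by (simp add: rf_mult rf_diff rf_power)
  hence "g = (va - vq^N) * u" by (simp add: rf_inj)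
  thus "(va - vq^N) dvd g" by simp
next
  assume "(va - vq^N) dvd g"
  then obtain u where "g = (va - vq^N) * u" by (auto elim: dvdE)
  thus "sig (rf vq ^ N) (rf vb) g = 0"
    by (simp add: rhom_mult[OF rhom_sig] rhom_diff[OF rhom_sig] rhom_power[OF rhom_sig])
qed

lemma ker3: "sig (rf va) (rf vq ^ N) g = 0 \<longleftrightarrow> (vb - vq^N) dvd g"
proof
  have R1: "rf g \<in> range rf" for g by simp
  have R2: "rf vq ^ N \<in> range rf" by (simp add: rf_power[symmetric])
  have R3: "u + v \<in> range rf" if "u \<in> range rf" "v \<in> range rf" for u v
  proof -
    from that obtain a b where "u = rf a" "v = rf b" by auto
    thus ?thesis by (simp add: rf_add[symmetric])
  qed
  have R4: "u * v \<in> range rf" if "u \<in> range rf" "v \<in> range rf" for u v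
  proof -
    from that obtain a b where "u = rf a" "v = rf b" by auto
    thus ?thesis by (simp add: rf_mult[symmetric])
  qed
  assume h: "sig (rf va) (rf vq ^ N) g = 0"
  obtain t where "t \<in> range rf" "rf g - sig (rf va) (rf vq ^ N) g = (rf vb - rf vq ^ N) * t"
    using kernel_b[of "range rf" "rf vq ^ N", OF R1 R2 R3 R4] by blast
  then obtain u where "rf g = (rf vb - rf vq ^ N) * rf u" using h by auto
  hence "rf g = rf ((vb - vq^N) * u)" by (simp add: rf_mult rf_diff rf_power)
  hence "g = (vb - vq^N) * u" by (simp add: rf_inj)
  thus "(vb - vq^N) dvd g" by simp
next
  assume "(vb - vq^N) dvd g"
  then obtain u where "g = (vb - vq^N) * u" by (auto elim: dvdE)
  thus "sig (rf va) (rf vq ^ N) g = 0"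
    by (simp add: rhom_mult[OF rhom_sig] rhom_diff[OF rhom_sig] rhom_power[OF rhom_sig])
qed

lemma coprime_f1_vq:
  assumes "N > 0" shows "coprime (1 - va * vq^N) (vq ^ k)"
proof -
  have "coprime (1 - va * vq^N) vq"
  proof (rule coprimeI)
    fix c assume c1: "c dvd 1 - va * vq^N" and c2: "c dvd vq"
    have "vq dvd va * vq^N" using assms by (simp add: dvd_power)
    hence "c dvd va * vq^N" using c2 dvd_trans by blast
    hence "c dvd (1 - va * vq^N) + va * vq^N" using c1 by (rule dvd_add[rotated])
    thus "is_unit c" by simp
  qed
  thus ?thesis by simp
qed

lemma ker1:
  assumes N0: "N > 0"
  shows "sig (1 / rf vq ^ N) (rf vb) g = 0 \<longleftrightarrow> (1 - va * vq^N) dvd g"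
proof
  define S where "S = {rf u / rf vq ^ k | u k. True}"
  have q0: "rf vq ^ k \<noteq> 0" for k using rf_vq_nz by simp
  have S1: "rf g \<in> S" for g unfolding S_def by (rule CollectI, rule exI[of _ g], rule exI[of _ 0]) simp
  have S2: "1 / rf vq ^ N \<in> S" unfolding S_def by (rule CollectI, rule exI[of _ 1], rule exI[of _ N]) (simp add: rf_1)
  have S3: "u + v \<in> S" if uS: "u \<in> S" and vS: "v \<in> S" for u v
  proof -
    obtain u1 k1 v1 k2 where "u = rf u1 / rf vq ^ k1" "v = rf v1 / rf vq ^ k2" using uS vS unfolding S_def by blast
    hence "u + v = (rf u1 * rf vq ^ k2 + rf v1 * rf vq ^ k1) / (rf vq ^ k1 * rf vq ^ k2)"
      using q0 by (simp add: add_frac_eq)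
    hence "u + v = rf (u1 * vq^k2 + v1 * vq^k1) / rf vq ^ (k1 + k2)"
      by (simp add: rf_add rf_mult rf_power power_add)
    thus ?thesis unfolding S_def by blast
  qed
  have S4: "u * v \<in> S" if uS: "u \<in> S" and vS: "v \<in> S" for u v
  proof -
    obtain u1 k1 v1 k2 where "u = rf u1 / rf vq ^ k1" "v = rf v1 / rf vq ^ k2" using uS vS unfolding S_def by blast
    hence "u * v = rf (u1 * v1) / rf vq ^ (k1 + k2)"
      by (simp add: rf_mult power_add)
    thus ?thesis unfolding S_def by blast
  qed
  assume h: "sig (1 / rf vq ^ N) (rf vb) g = 0"
  obtain t where "t \<in> S" "rf g - sig (1 / rf vq ^ N) (rf vb) g = (rf va - 1 / rf vq ^ N) * t"
    using kernel_a[of S, OF S1 S2 S3 S4] by blast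
  then obtain u k where "rf g = (rf va - 1 / rf vq ^ N) * (rf u / rf vq ^ k)" using h unfolding S_def by auto
  hence "rf g * rf vq ^ (N + k) = (rf va * rf vq ^ N - 1) * rf u"
    using q0 by (simp add: field_simps power_add)
  hence "rf (g * vq ^ (N + k)) = rf ((va * vq ^ N - 1) * u)" by (simp add: rf_mult rf_diff rf_power rf_1)
  hence "g * vq ^ (N + k) = (1 - va * vq ^ N) * (- u)" by (simp add: rf_inj algebra_simps)
  hence "(1 - va * vq^N) dvd g * vq ^ (N + k)" by (metis dvd_triv_left)
  thus "(1 - va * vq^N) dvd g" using coprime_dvd_mult_left_iff[OF coprime_f1_vq[OF N0]] by blast
next
  assume "(1 - va * vq^N) dvd g"
  then obtain u where "g = (1 - va * vq^N) * u" by (auto elim: dvdE)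
  thus "sig (1 / rf vq ^ N) (rf vb) g = 0" using rf_vq_nz
    by (simp add: rhom_mult[OF rhom_sig] rhom_diff[OF rhom_sig] rhom_power[OF rhom_sig] rhom_1[OF rhom_sig])
qed

lemma prime_from_kernel:
  fixes \<phi> :: "mpoly4 \<Rightarrow> 'k::field"
  assumes h: "rhom \<phi>" and ker: "\<And>g. \<phi> g = 0 \<longleftrightarrow> f dvd g" and f0: "f \<noteq> 0"
  shows "prime_elem f"
proof (rule prime_elemI[OF f0])
  show "\<not> f dvd 1" using ker[of 1] rhom_1[OF h] by simp
  fix a b assume "f dvd a * b"
  hence "\<phi> a * \<phi> b = 0" using ker[of "a*b"] rhom_mult[OF h] by simp
  thus "f dvd a \<or> f dvd b" using ker by simp
qed

lemma coprime_from_kernel: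
  fixes \<phi> :: "mpoly4 \<Rightarrow> 'k::field"
  assumes "rhom \<phi>" "\<And>g. \<phi> g = 0 \<longleftrightarrow> f dvd g" "f \<noteq> 0" "\<phi> d \<noteq> 0"
  shows "coprime d f"
  using prime_elem_imp_coprime[OF prime_from_kernel[OF assms(1-3)], of d] assms(2,4)
  by (simp add: coprime_commute)




definition E :: "(mpoly4 \<Rightarrow> 'k::field) \<Rightarrow> ratfun4 \<Rightarrow> 'k \<Rightarrow> bool" where
  "E \<phi> x v \<longleftrightarrow> rhom \<phi> \<and> (\<exists>n d. x = Fract n d \<and> \<phi> d \<noteq> 0 \<and> v = \<phi> n / \<phi> d)"

lemma E_rf: "rhom \<phi> \<Longrightarrow> E \<phi> (rf g) (\<phi> g)"
  unfolding E_def rf_def by (rule conjI, assumption, rule exI[of _ g], rule exI[of _ 1]) (simp add: rhom_1)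

lemma E_1: "rhom \<phi> \<Longrightarrow> E \<phi> 1 1"
  using E_rf[of \<phi> 1] by (simp add: rf_1 rhom_1)

lemma E_hom: "E \<phi> x v \<Longrightarrow> rhom \<phi>" by (simp add: E_def)

lemma E_add: assumes "E \<phi> x v" "E \<phi> y w" shows "E \<phi> (x + y) (v + w)"
proof -
  from assms obtain n d n' d' where h: "rhom \<phi>" "x = Fract n d" "\<phi> d \<noteq> 0" "v = \<phi> n / \<phi> d"
    "y = Fract n' d'" "\<phi> d' \<noteq> 0" "w = \<phi> n' / \<phi> d'" unfolding E_def by blast
  have d0: "d \<noteq> 0" "d' \<noteq> 0" using h rhom_0[OF h(1)] by auto
  have "x + y = Fract (n * d' + n' * d) (d * d')" using h d0 by simp
  moreover have "\<phi> (d * d') \<noteq> 0" using h by (simp add: rhom_mult)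
  moreover have "v + w = \<phi> (n * d' + n' * d) / \<phi> (d * d')"
    using h by (simp add: rhom_mult rhom_add field_simps)
  ultimately show ?thesis unfolding E_def using h(1) by blast
qed

lemma E_mult: assumes "E \<phi> x v" "E \<phi> y w" shows "E \<phi> (x * y) (v * w)"
proof -
  from assms obtain n d n' d' where h: "rhom \<phi>" "x = Fract n d" "\<phi> d \<noteq> 0" "v = \<phi> n / \<phi> d"
    "y = Fract n' d'" "\<phi> d' \<noteq> 0" "w = \<phi> n' / \<phi> d'" unfolding E_def by blast
  have "x * y = Fract (n * n') (d * d')" using h by simp
  moreover have "\<phi> (d * d') \<noteq> 0" using h by (simp add: rhom_mult)
  moreover have "v * w = \<phi> (n * n') / \<phi> (d * d')"
    using h by (simp add: rhom_mult)
  ultimately show ?thesis unfolding E_def using h(1) by blast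
qed

lemma E_uminus: assumes "E \<phi> x v" shows "E \<phi> (- x) (- v)"
proof -
  from assms obtain n d where h: "rhom \<phi>" "x = Fract n d" "\<phi> d \<noteq> 0" "v = \<phi> n / \<phi> d"
    unfolding E_def by blast
  have "- x = Fract (- n) d" using h by simp
  moreover have "- v = \<phi> (- n) / \<phi> d" using h by (simp add: rhom_uminus)
  ultimately show ?thesis unfolding E_def using h by blast
qed

lemma E_diff: assumes "E \<phi> x v" "E \<phi> y w" shows "E \<phi> (x - y) (v - w)"
  using E_add[OF assms(1) E_uminus[OF assms(2)]] by simp

lemma E_div: assumes "E \<phi> x v" "E \<phi> y w" "w \<noteq> 0" shows "E \<phi> (x / y) (v / w)"
proof -
  from assms obtain n d n' d' where h: "rhom \<phi>" "x = Fract n d" "\<phi> d \<noteq> 0" "v = \<phi> n / \<phi> d"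
    "y = Fract n' d'" "\<phi> d' \<noteq> 0" "w = \<phi> n' / \<phi> d'" unfolding E_def by blast
  have n0: "\<phi> n' \<noteq> 0" using h assms(3) by auto
  have "x / y = Fract (n * d') (d * n')" using h by simp
  moreover have "\<phi> (d * n') \<noteq> 0" using h n0 by (simp add: rhom_mult)
  moreover have "v / w = \<phi> (n * d') / \<phi> (d * n')"
    unfolding h(4) h(7) using h(3,6) n0 by (simp add: rhom_mult[OF h(1)] field_simps)
  ultimately show ?thesis unfolding E_def using h(1) by blast
qed

lemma E_pow: assumes "E \<phi> x v" shows "E \<phi> (x ^ k) (v ^ k)"
  by (induction k) (simp_all add: E_1[OF E_hom[OF assms]] E_mult[OF assms])

lemma E_qpoch: assumes "E \<phi> x v" "E \<phi> y w" shows "E \<phi> (qpoch x y k) (qpoch v w k)"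
proof (induction k)
  case 0 then show ?case using E_1[OF E_hom[OF assms(1)]] by simp
next
  case (Suc k) then show ?case unfolding qpoch_Suc
    by (intro E_mult E_diff E_1[OF E_hom[OF assms(1)]] E_pow assms)
qed

lemma E_sum: assumes "rhom \<phi>" "\<And>k. k \<in> A \<Longrightarrow> E \<phi> (f k) (g k)" shows "E \<phi> (sum f A) (sum g A)"
  using assms(2)
proof (induction A rule: infinite_finite_induct)
  case (infinite A) then show ?case using E_rf[OF assms(1), of 0] by (simp add: rf_0 rhom_0[OF assms(1)])
next
  case empty then show ?case using E_rf[OF assms(1), of 0] by (simp add: rf_0 rhom_0[OF assms(1)])
next
  case (insert x F) then show ?case by (simp add: E_add)
qed

lemma E_nz: assumes "E \<phi> x v" "v \<noteq> 0" shows "x \<noteq> 0"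
proof
  assume x0: "x = 0"
  from assms obtain n d where h: "rhom \<phi>" "x = Fract n d" "\<phi> d \<noteq> 0" "v = \<phi> n / \<phi> d"
    unfolding E_def by blast
  have d0: "d \<noteq> 0" using h rhom_0[OF h(1)] by auto
  have "Fract n d = Fract 0 1" using x0 h by (simp add: Zero_fract_def)
  hence "n = 0" using d0 by (simp add: eq_fract)
  thus False using h assms(2) rhom_0[OF h(1)] by simp
qed

lemma E_zero: "E \<phi> x 0 \<Longrightarrow> \<exists>n d. x = Fract n d \<and> \<phi> d \<noteq> 0 \<and> \<phi> n = 0"
  unfolding E_def by auto

lemmas E_rules = E_add E_mult E_diff E_div E_pow E_qpoch

lemma E_LHSf:
  assumes Ea: "E \<phi> xa \<alpha>" and Eb: "E \<phi> xb \<beta>" and Ec: "E \<phi> xc \<gamma>" and Eq: "E \<phi> xq \<kappa>"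
    and nz: "\<alpha> \<noteq> 0" "\<beta> \<noteq> 0" "\<beta> * \<gamma> \<noteq> 0"
    and nzq: "\<forall>k\<le>m. qpoch (\<kappa>^d) (\<kappa>^d) k * qpoch \<gamma> (\<kappa>^d) k * qpoch (\<kappa>^(d+3)/(\<beta>*\<gamma>)) (\<kappa>^d) k \<noteq> 0"
  shows "E \<phi> (LHSf d m xa xb xc xq) (LHSf d m \<alpha> \<beta> \<gamma> \<kappa>)"
  unfolding LHSf_def
  apply (rule E_sum[OF E_hom[OF Ea]])
  apply (intro E_rules Ea Eb Ec Eq)
  using nz nzq by auto

lemma E_RHSf:
  assumes Ea: "E \<phi> xa \<alpha>" and Eb: "E \<phi> xb \<beta>" and Ec: "E \<phi> xc \<gamma>" and Eq: "E \<phi> xq \<kappa>"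
    and nz: "(\<alpha> - \<beta>) * (1 - \<alpha> * \<beta>) \<noteq> 0" "\<alpha> * \<kappa> \<noteq> 0" "\<kappa> \<noteq> 0" "\<kappa>^2 \<noteq> 0" "\<beta> \<noteq> 0" "\<gamma> \<noteq> 0"
      "\<beta> * \<gamma> \<noteq> 0"
      "qpoch \<gamma> (\<kappa>^d) m * qpoch (\<gamma>/\<kappa>^2) (\<kappa>^d) m \<noteq> 0"
      "qpoch \<gamma> (\<kappa>^d) m * qpoch (\<kappa>^(d+3)/(\<beta>*\<gamma>)) (\<kappa>^d) m \<noteq> 0"
  shows "E \<phi> (RHSf d m N xa xb xc xq) (RHSf d m N \<alpha> \<beta> \<gamma> \<kappa>)"
  unfolding RHSf_def
  apply (intro E_rules Ea Eb Ec Eq E_1[OF E_hom[OF Ea]])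
  using nz by auto




lemma rhom_id: "rhom (\<lambda>z::complex. z)" by (simp add: rhom_def)

definition "phi1 = ev4 (\<lambda>z::complex. z) 2 2 2 1"
definition "phi2 = ev4 (\<lambda>z::complex. z) 2 2 2 2"
lemma rhom_phi1: "rhom phi1" unfolding phi1_def by (rule rhom_ev4[OF rhom_id])
lemma rhom_phi2: "rhom phi2" unfolding phi2_def by (rule rhom_ev4[OF rhom_id])

lemma Ea1: "E phi1 (rf va) 2" using E_rf[OF rhom_phi1, of va] by (simp add: phi1_def rhom_id)
lemma Eb1: "E phi1 (rf vb) 2" using E_rf[OF rhom_phi1, of vb] by (simp add: phi1_def rhom_id)
lemma Ec1: "E phi1 (rf vc) 2" using E_rf[OF rhom_phi1, of vc] by (simp add: phi1_def rhom_id)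
lemma Eq1: "E phi1 (rf vq) 1" using E_rf[OF rhom_phi1, of vq] by (simp add: phi1_def rhom_id)
lemma E11: "E phi1 1 1" by (rule E_1[OF rhom_phi1])
lemma Eq2: "E phi2 (rf vq) 2" using E_rf[OF rhom_phi2, of vq] by (simp add: phi2_def rhom_id)
lemma E12: "E phi2 1 1" by (rule E_1[OF rhom_phi2])

lemma two_pow_ne_1: "(2::complex)^k = 1 \<longleftrightarrow> k = 0"
proof -
  have "(2::complex)^k = of_nat (2^k)" by simp
  moreover have "(of_nat (2^k) :: complex) = 1 \<longleftrightarrow> (2::nat)^k = 1" by (metis of_nat_1 of_nat_eq_iff)
  ultimately show ?thesis by simp
qed

named_theorems E1s
declare Ea1 [E1s] Eb1 [E1s] Ec1 [E1s] Eq1 [E1s] E11 [E1s]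


context
  fixes d N :: nat
begin

abbreviation "a \<equiv> rf va"
abbreviation "b \<equiv> rf vb"
abbreviation "c \<equiv> rf vc"
abbreviation "q \<equiv> rf vq"

lemma nz_basic: "a \<noteq> 0" "b \<noteq> 0" "c \<noteq> 0" "q \<noteq> 0" "q^N \<noteq> 0" "b * c \<noteq> 0" "q^N * c \<noteq> 0"
  "a - q^N \<noteq> 0" "1 - a * q^N \<noteq> 0" "q^N - b \<noteq> 0" "1 - q^N * b \<noteq> 0"
  "(a - q^N) * (1 - a * q^N) \<noteq> 0" "(q^N - b) * (1 - q^N * b) \<noteq> 0"
  "(1/q^N - b) * (1 - 1/q^N * b) \<noteq> 0"
  subgoal by (rule E_nz[where \<phi>=phi1], (rule E_rules E1s | simp)+)
  subgoal by (rule E_nz[where \<phi>=phi1], (rule E_rules E1s | simp)+)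
  subgoal by (rule E_nz[where \<phi>=phi1], (rule E_rules E1s | simp)+)
  subgoal by (rule E_nz[where \<phi>=phi1], (rule E_rules E1s | simp)+)
  subgoal by (rule E_nz[where \<phi>=phi1], (rule E_rules E1s | simp)+)
  subgoal by (rule E_nz[where \<phi>=phi1], (rule E_rules E1s | simp)+)
  subgoal by (rule E_nz[where \<phi>=phi1], (rule E_rules E1s | simp)+)
  subgoal by (rule E_nz[where \<phi>=phi1], (rule E_rules E1s | simp)+)
  subgoal by (rule E_nz[where \<phi>=phi1], (rule E_rules E1s | simp)+)
  subgoal by (rule E_nz[where \<phi>=phi1], (rule E_rules E1s | simp)+)
  subgoal by (rule E_nz[where \<phi>=phi1], (rule E_rules E1s | simp)+)
  subgoal by (rule E_nz[where \<phi>=phi1], (rule E_rules E1s | simp)+)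
  subgoal by (rule E_nz[where \<phi>=phi1], (rule E_rules E1s | simp)+)
  subgoal by (rule E_nz[where \<phi>=phi1], (rule E_rules E1s | simp)+)
  done

lemma nzC: "1 - c * (q^d)^i \<noteq> 0" by (rule E_nz[where \<phi>=phi1], (rule E_rules E1s | simp)+)
lemma nzC2: "1 - c / q^2 * (q^d)^i \<noteq> 0" by (rule E_nz[where \<phi>=phi1], (rule E_rules E1s | simp)+)
lemma nzBb: "1 - q^(d+3)/(b*c) * (q^d)^i \<noteq> 0" by (rule E_nz[where \<phi>=phi1], (rule E_rules E1s | simp)+)
lemma nzBQ: "1 - q^(d+3)/(q^N*c) * (q^d)^i \<noteq> 0" by (rule E_nz[where \<phi>=phi1], (rule E_rules E1s | simp)+)
lemma nzD3: "1 - (a*q)*(q/a)*q^d/(c*(q^d)^n)*(q^d)^i \<noteq> 0" by (rule E_nz[where \<phi>=phi1], (rule E_rules E1s | simp)+)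
lemma nzE3: "1 - c*(q^d)^n/((a*q)*(q/a)) \<noteq> 0" by (rule E_nz[where \<phi>=phi1], (rule E_rules E1s | simp)+)
lemma nzD2: "1 - (q^N*q)*(q/b)*q^d/(c*(q^d)^n)*(q^d)^i \<noteq> 0" by (rule E_nz[where \<phi>=phi1], (rule E_rules E1s | simp)+)
lemma nzE2: "1 - c*(q^d)^n/((q^N*q)*(q/b)) \<noteq> 0" by (rule E_nz[where \<phi>=phi1], (rule E_rules E1s | simp)+)

lemma nzP: assumes "d > 0" shows "1 - q^d * (q^d)^i \<noteq> 0"
  apply (rule E_nz[where \<phi>=phi2], (rule E_rules Eq2 E12)+)
  using assms by (simp add: two_pow_ne_1 flip: power_add power_mult)

end



lemma fract_lowest:
  obtains n d :: mpoly4 where "x = Fract n d" "d \<noteq> 0" "coprime n d"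
proof -
  obtain n0 d0 where h: "x = Fract n0 d0" "d0 \<noteq> 0" by (cases x) auto
  let ?g = "gcd n0 d0"
  have g0: "?g \<noteq> 0" using h by simp
  have "n0 = ?g * (n0 div ?g)" "d0 = ?g * (d0 div ?g)" by simp_all
  hence "Fract n0 d0 = Fract (n0 div ?g) (d0 div ?g)" using g0 by (metis mult_fract_cancel)
  moreover have "d0 div ?g \<noteq> 0" using h by (metis \<open>d0 = ?g * (d0 div ?g)\<close> mult_zero_right)
  moreover have "coprime (n0 div ?g) (d0 div ?g)" using h by (intro div_gcd_coprime) simp
  ultimately show ?thesis using that h by metis
qed

lemma combine:
  fixes \<phi>1 \<phi>2 \<phi>3 :: "mpoly4 \<Rightarrow> ratfun4"
  assumes R: "rhom \<phi>1" "rhom \<phi>2" "rhom \<phi>3"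
    and K1: "\<And>g. \<phi>1 g = 0 \<longleftrightarrow> f1 dvd g" and K2: "\<And>g. \<phi>2 g = 0 \<longleftrightarrow> f2 dvd g"
    and K3: "\<And>g. \<phi>3 g = 0 \<longleftrightarrow> f3 dvd g"
    and nz: "f1 \<noteq> 0" "f2 \<noteq> 0" "f3 \<noteq> 0"
    and E1: "E \<phi>1 (A - B) 0" and E2: "E \<phi>2 (A - B) 0" and E3: "E \<phi>3 (A - B) 0"
    and P: "\<phi>1 f2 \<noteq> 0" "\<phi>1 f3 \<noteq> 0" "\<phi>2 f3 \<noteq> 0"
  shows "rf_cong A B [f1, f2, f3]"
proof -
  obtain n d where nd: "A - B = Fract n d" "d \<noteq> 0" "coprime n d" using fract_lowest by blast
  have dv: "f dvd n \<and> coprime d f" if th: "\<phi> \<in> {\<phi>1,\<phi>2,\<phi>3}" "rhom \<phi>" "\<And>g. \<phi> g = 0 \<longleftrightarrow> f dvd g" "f \<noteq> 0"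
     "E \<phi> (A - B) 0" for \<phi> f
  proof -
    obtain n' d' where h: "A - B = Fract n' d'" "\<phi> d' \<noteq> 0" "\<phi> n' = 0" using E_zero[OF th(5)] by blast
    have d'0: "d' \<noteq> 0" using h rhom_0[OF that(2)] by auto
    have "n * d' = n' * d" using nd h d'0 by (simp add: eq_fract)
    moreover have "f dvd n'" using h th(3) by simp
    ultimately have "f dvd n * d'" by (metis dvd_mult2)
    moreover have "coprime f d'" using coprime_from_kernel[OF th(2,3,4) h(2)] by (simp add: coprime_commute)
    ultimately have fn: "f dvd n" using coprime_dvd_mult_left_iff by blast
    have "coprime d f" using coprime_divisors[OF fn dvd_refl nd(3)] by (simp add: coprime_commute)
    thus ?thesis using fn by simp
  qed
  have d1: "f1 dvd n" "coprime d f1" using dv[of \<phi>1 f1] R K1 nz E1 by auto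
  have d2: "f2 dvd n" "coprime d f2" using dv[of \<phi>2 f2] R K2 nz E2 by auto
  have d3: "f3 dvd n" "coprime d f3" using dv[of \<phi>3 f3] R K3 nz E3 by auto
  have c12: "coprime f2 f1" using coprime_from_kernel[OF R(1) K1 nz(1) P(1)] .
  have c13: "coprime f3 f1" using coprime_from_kernel[OF R(1) K1 nz(1) P(2)] .
  have c23: "coprime f3 f2" using coprime_from_kernel[OF R(2) K2 nz(2) P(3)] .
  have "f2 * f3 dvd n" using divides_mult[OF d2(1) d3(1)] c23 by (simp add: coprime_commute)
  hence "f1 * (f2 * f3) dvd n" using divides_mult[OF d1(1)] c12 c13 by (simp add: coprime_commute)
  then obtain k where k: "n = f1 * (f2 * f3) * k" by (auto elim: dvdE)
  have "A - B = rf (prod_list [f1, f2, f3]) * Fract k d"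
    using nd k by (simp add: rf_def)
  thus ?thesis unfolding rf_cong_def using nd d1 d2 d3 by auto
qed




lemma Esig: "E (sig x y) (rf va) x" "E (sig x y) (rf vb) y" "E (sig x y) (rf vc) (rf vc)" "E (sig x y) (rf vq) (rf vq)"
  using E_rf[OF rhom_sig, of x y va] E_rf[OF rhom_sig, of x y vb] E_rf[OF rhom_sig, of x y vc] E_rf[OF rhom_sig, of x y vq]
  by simp_all

lemma nzInv: assumes "N > 0" shows "1 / rf vq ^ N - rf vq ^ N \<noteq> 0"
proof -
  have e: "E phi2 (1 / rf vq ^ N - rf vq ^ N) (1 / 2 ^ N - 2 ^ N)"
    by (rule E_rules Eq2 E12 | simp)+
  have "1 / (2::complex) ^ N - 2 ^ N \<noteq> 0"
  proof
    assume "1 / (2::complex) ^ N - 2 ^ N = 0"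
    hence "(2::complex) ^ N * 2 ^ N = 1" by (simp add: field_simps)
    hence "(2::complex) ^ (N + N) = 1" by (simp add: power_add)
    thus False using assms two_pow_ne_1 by simp
  qed
  thus ?thesis using E_nz[OF e] by blast
qed

lemma main:
  fixes d m N :: nat
  assumes d0: "d > 0" and N0: "N > 0" and hNm: "N = d*m + 1"
  shows "rf_cong (LHSf d m (rf va) (rf vb) (rf vc) (rf vq)) (RHSf d m N (rf va) (rf vb) (rf vc) (rf vq))
     [1 - va * vq ^ N, va - vq ^ N, vb - vq ^ N]"
proof -
  let ?a = "rf va" and ?b = "rf vb" and ?c = "rf vc" and ?q = "rf vq"
  let ?Q = "?q ^ N" and ?p = "?q ^ d"
  note nzb = nz_basic
  have hN: "?Q = ?q * ?p ^ m" unfolding hNm by (simp add: power_add power_mult[symmetric] mult.commute)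
  have QP: "qpoch ?p ?p k \<noteq> 0" for k by (rule qpoch_nz, rule nzP[OF d0])
  have QC: "qpoch ?c ?p k \<noteq> 0" for k by (rule qpoch_nz, rule nzC)
  have QC2: "qpoch (?c / ?q^2) ?p k \<noteq> 0" for k by (rule qpoch_nz, rule nzC2)
  have QBb: "qpoch (?q^(d+3)/(?b*?c)) ?p k \<noteq> 0" for k by (rule qpoch_nz, rule nzBb)
  have QBQ: "qpoch (?q^(d+3)/(?Q*?c)) ?p k \<noteq> 0" for k by (rule qpoch_nz, rule nzBQ)
  have hP: "\<forall>i<m. 1 - ?p * ?p^i \<noteq> 0" using nzP[OF d0] by blast
  have hC: "\<forall>i<m. 1 - ?c * ?p^i \<noteq> 0" using nzC by blast
  define s3 where "s3 = sig ?a ?Q"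
  have L3: "E s3 (LHSf d m ?a ?b ?c ?q) (LHSf d m ?a ?Q ?c ?q)"
    unfolding s3_def by (rule E_LHSf[OF Esig]) (use nzb QP QC QBQ in auto)
  have R3: "E s3 (RHSf d m N ?a ?b ?c ?q) (RHSf d m N ?a ?Q ?c ?q)"
    unfolding s3_def by (rule E_RHSf[OF Esig]) (use nzb QC QC2 QBQ in auto)
  have eq3: "LHSf d m ?a ?Q ?c ?q = RHSf d m N ?a ?Q ?c ?q"
    by (rule spec_b[OF _ _ _ hN _ _ hP hC]) (use nzb nzD3 nzE3 in auto)
  have Z3: "E s3 (LHSf d m ?a ?b ?c ?q - RHSf d m N ?a ?b ?c ?q) 0"
    using E_diff[OF L3 R3] eq3 by simp
  define s2 where "s2 = sig ?Q ?b"
  have L2: "E s2 (LHSf d m ?a ?b ?c ?q) (LHSf d m ?Q ?b ?c ?q)"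
    unfolding s2_def by (rule E_LHSf[OF Esig]) (use nzb QP QC QBb in auto)
  have R2: "E s2 (RHSf d m N ?a ?b ?c ?q) (RHSf d m N ?Q ?b ?c ?q)"
    unfolding s2_def by (rule E_RHSf[OF Esig]) (use nzb QC QC2 QBb in auto)
  have eq2: "LHSf d m ?Q ?b ?c ?q = RHSf d m N ?Q ?b ?c ?q"
    by (rule spec_a[OF _ _ _ hN _ _ hP hC]) (use nzb nzD2 nzE2 in auto)
  have Z2: "E s2 (LHSf d m ?a ?b ?c ?q - RHSf d m N ?a ?b ?c ?q) 0"
    using E_diff[OF L2 R2] eq2 by simp
  define s1 where "s1 = sig (1/?Q) ?b"
  have L1: "E s1 (LHSf d m ?a ?b ?c ?q) (LHSf d m (1/?Q) ?b ?c ?q)"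
    unfolding s1_def by (rule E_LHSf[OF Esig]) (use nzb QP QC QBb in auto)
  have R1: "E s1 (RHSf d m N ?a ?b ?c ?q) (RHSf d m N (1/?Q) ?b ?c ?q)"
    unfolding s1_def by (rule E_RHSf[OF Esig]) (use nzb QC QC2 QBb in auto)
  have eq1: "LHSf d m (1/?Q) ?b ?c ?q = RHSf d m N (1/?Q) ?b ?c ?q"
    by (rule spec_a'[OF _ _ _ hN _ _ hP hC]) (use nzb nzD2 nzE2 in auto)
  have Z1: "E s1 (LHSf d m ?a ?b ?c ?q - RHSf d m N ?a ?b ?c ?q) 0"
    using E_diff[OF L1 R1] eq1 by simp
  show ?thesis
  proof (rule combine[OF _ _ _ _ _ _ _ _ _ Z1 Z2 Z3])
    show "rhom s1" "rhom s2" "rhom s3" unfolding s1_def s2_def s3_def by (rule rhom_sig)+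
    show "s1 g = 0 \<longleftrightarrow> (1 - va * vq ^ N) dvd g" for g unfolding s1_def by (rule ker1[OF N0])
    show "s2 g = 0 \<longleftrightarrow> (va - vq ^ N) dvd g" for g unfolding s2_def by (rule ker2)
    show "s3 g = 0 \<longleftrightarrow> (vb - vq ^ N) dvd g" for g unfolding s3_def by (rule ker3)
    show "1 - va * vq ^ N \<noteq> 0"
    proof
      assume "1 - va * vq ^ N = 0"
      hence "rf (1 - va * vq ^ N) = 0" by (simp add: rf_0)
      hence "1 - rf va * rf vq ^ N = 0" by (simp only: rf_diff rf_mult rf_power rf_1)
      thus False using nzb(9)[of N] by blast
    qed
    show "va - vq ^ N \<noteq> 0"
    proof
      assume "va - vq ^ N = 0"
      hence "rf (va - vq ^ N) = 0" by (simp add: rf_0)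
      hence "rf va - rf vq ^ N = 0" by (simp only: rf_diff rf_mult rf_power rf_1)
      thus False using nzb(8)[of N] by blast
    qed
    show "vb - vq ^ N \<noteq> 0"
    proof
      assume "vb - vq ^ N = 0"
      hence "rf (vb - vq ^ N) = 0" by (simp add: rf_0)
      hence "rf vb - rf vq ^ N = 0" by (simp only: rf_diff rf_mult rf_power rf_1)
      thus False using nzb(10)[of N] by (simp add: right_minus_eq)
    qed
    show "s1 (va - vq ^ N) \<noteq> 0" unfolding s1_def using nzInv[OF N0]
      by (simp add: rhom_diff[OF rhom_sig] rhom_power[OF rhom_sig])
    show "s1 (vb - vq ^ N) \<noteq> 0" unfolding s1_def using nzb
      by (simp add: rhom_diff[OF rhom_sig] rhom_power[OF rhom_sig])
    show "s2 (vb - vq ^ N) \<noteq> 0" unfolding s2_def using nzb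
      by (simp add: rhom_diff[OF rhom_sig] rhom_power[OF rhom_sig])
  qed
qed


theorem theorem2p1:
  fixes d n t :: nat
  assumes "d \<ge> 2" and "n > 0" and "t \<in> {1, d - 1}" and "n mod d = t mod d"
  shows "let a = rf va; b = rf vb; c = rf vc; q = rf vq;
             p = q ^ d; N = t * n; m = (t * n - 1) div d in
    rf_cong
      (\<Sum>k = 0..m. qpoch (a * q) p k * qpoch (q / a) p k * qpoch (q / b) p k
          / (qpoch p p k * qpoch c p k * qpoch (q ^ (d + 3) / (b * c)) p k) * p ^ k)
      ((1 - a * q ^ N) * (a - q ^ N) / ((a - b) * (1 - a * b))
          * (qpoch (c / (a * q)) p m * qpoch (a * c / q) p m)
          / (qpoch c p m * qpoch (c / q ^ 2) p m)
       + (b - q ^ N) * (a * b - 1 - a ^ 2 + a * q ^ N) / ((a - b) * (1 - a * b))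
          * ((q / b) ^ m * qpoch (b * c / q) p m * qpoch (q ^ (d + 2) / c) p m)
          / (qpoch c p m * qpoch (q ^ (d + 3) / (b * c)) p m))
      [1 - va * vq ^ N, va - vq ^ N, vb - vq ^ N]"
proof -
  have d0: "d > 0" using assms(1) by simp
  obtain k where dk: "d = k + 2" using assms(1) by (metis add.commute le_Suc_ex)
  have tn: "t * n mod d = 1"
  proof (cases "t = 1")
    case True
    then show ?thesis using assms(1,4) by simp
  next
    case False
    hence t: "t = d - 1" using assms(3) by auto
    have "t * n mod d = (t * (n mod d)) mod d" by (simp add: mod_mult_right_eq)
    also have "\<dots> = ((k+1) * (k+1)) mod (k+2)" using assms(4) t dk by simp
    also have "(k+1) * (k+1) = k * (k+2) + 1" by (simp add: algebra_simps)
    also have "(k * (k+2) + 1) mod (k+2) = 1" by (simp only: mod_mult_self3) simp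
    finally show ?thesis using dk by simp
  qed
  define N where "N = t * n"
  define m where "m = (t * n - 1) div d"
  have hNm: "N = d * m + 1"
  proof -
    have "N = d * (N div d) + N mod d" by simp
    hence e: "N = d * (N div d) + 1" using tn by (simp add: N_def)
    hence "N - 1 = d * (N div d)" by simp
    hence "m = N div d" unfolding m_def N_def[symmetric] using d0 by simp
    thus ?thesis using e by simp
  qed
  have N0: "N > 0" using hNm by simp
  have "rf_cong (LHSf d m (rf va) (rf vb) (rf vc) (rf vq)) (RHSf d m N (rf va) (rf vb) (rf vc) (rf vq))
     [1 - va * vq ^ N, va - vq ^ N, vb - vq ^ N]" by (rule main[OF d0 N0 hNm])
  thus ?thesis unfolding Let_def LHSf_def RHSf_def N_def m_def .
qed

end
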